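(* Let $N\ge3$ and let $\bm A=A_1\cdots A_N$ be a random $N$-bit string with distribution $p_{\bm A}$ on $\{0,1\}^N$. For $k\in\{1,\dots,N-1\}$ let $\bm A_{\bar k}$ denote the $(N-2)$-bit substring excluding bits $k$ and $N$. Suppose that $p_{\bm A_{\bar k}}(\bm a_{\bar k})>0$ and $p_{A_kA_N|\bm A_{\bar k}}(a_ka_N|\bm a_{\bar k})>0$ for all $k,a_k,a_N,\bm a_{\bar k}$. Then $p_{\bm A}$ is uniquely determined by the family of conditional distributions $\{p_{A_kA_N|\bm A_{\bar k}}\}_{k\in\{1,\dots,N-1\}}$: any two such distributions on $\{0,1\}^N$ satisfying the positivity conditions and having the same conditionals $p_{A_kA_N|\bm A_{\bar k}}$ for all $k\in\{1,\dots,N-1\}$ are equal. *)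

theory Defs
  imports Complex_Main
begin

text \<open>N-bit strings a = a_1 ... a_N, encoded as functions nat => bool that are False
  outside the index range 1..N.\<close>
definition bitstrings :: "nat \<Rightarrow> (nat \<Rightarrow> bool) set" where
  "bitstrings N = {a. \<forall>i. i \<notin> {1..N} \<longrightarrow> a i = False}"

definition is_distr :: "nat \<Rightarrow> ((nat \<Rightarrow> bool) \<Rightarrow> real) \<Rightarrow> bool" where
  "is_distr N p \<longleftrightarrow> (\<forall>a. 0 \<le> p a) \<and> (\<forall>a. a \<notin> bitstrings N \<longrightarrow> p a = 0)
     \<and> sum p (bitstrings N) = 1"

definition agree_excl :: "nat \<Rightarrow> nat \<Rightarrow> (nat \<Rightarrow> bool) \<Rightarrow> (nat \<Rightarrow> bool) \<Rightarrow> bool" where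
  "agree_excl N k a b \<longleftrightarrow> (\<forall>i \<in> {1..N} - {k, N}. a i = b i)"

text \<open>Marginal p_{A_kbar}(a_kbar), evaluated at the substring of a excluding bits k and N.\<close>
definition marg_excl :: "nat \<Rightarrow> ((nat \<Rightarrow> bool) \<Rightarrow> real) \<Rightarrow> nat \<Rightarrow> (nat \<Rightarrow> bool) \<Rightarrow> real" where
  "marg_excl N p k a = sum p {b \<in> bitstrings N. agree_excl N k a b}"

text \<open>Conditional p_{A_k A_N | A_kbar}(a_k a_N | a_kbar), where a is the full string.\<close>
definition cond_excl :: "nat \<Rightarrow> ((nat \<Rightarrow> bool) \<Rightarrow> real) \<Rightarrow> nat \<Rightarrow> (nat \<Rightarrow> bool) \<Rightarrow> real" where
  "cond_excl N p k a = p a / marg_excl N p k a"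

definition positive_conds :: "nat \<Rightarrow> ((nat \<Rightarrow> bool) \<Rightarrow> real) \<Rightarrow> bool" where
  "positive_conds N p \<longleftrightarrow> (\<forall>k \<in> {1..N-1}. \<forall>a \<in> bitstrings N.
      0 < marg_excl N p k a \<and> 0 < cond_excl N p k a)"

end

theory Submission
  imports Defs
begin

lemma marg_eq:
  assumes "agree_excl N k a b"
  shows "marg_excl N p k a = marg_excl N p k b"
proof -
  have "{c \<in> bitstrings N. agree_excl N k a c} = {c \<in> bitstrings N. agree_excl N k b c}"
    using assms unfolding agree_excl_def by auto
  thus ?thesis unfolding marg_excl_def by simp
qed

lemma pos:
  assumes "N \<ge> 3" "positive_conds N p" "a \<in> bitstrings N"
  shows "p a > 0"
proof -
  have "1 \<in> {1..N-1}" using assms(1) by auto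
  hence "0 < marg_excl N p 1 a" "0 < cond_excl N p 1 a" using assms unfolding positive_conds_def by auto
  thus ?thesis unfolding cond_excl_def by (simp add: zero_less_divide_iff)
qed

theorem lemma11:
  fixes N :: nat and p q :: "(nat \<Rightarrow> bool) \<Rightarrow> real"
  assumes "N \<ge> 3"
    and "is_distr N p" and "is_distr N q"
    and "positive_conds N p" and "positive_conds N q"
    and "\<forall>k \<in> {1..N-1}. \<forall>a \<in> bitstrings N. cond_excl N p k a = cond_excl N q k a"
  shows "p = q"
proof -
  define r where "r a = p a / q a" for a
  have step: "r a = r b" if ab: "a \<in> bitstrings N" "b \<in> bitstrings N" and x: "x \<in> {1..N}"
    and d: "\<forall>i. i \<noteq> x \<longrightarrow> a i = b i" for a b x
  proof -
    obtain k where k: "k \<in> {1..N-1}" "x \<in> {k, N}"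
    proof (cases "x = N")
      case True thus ?thesis using that[of 1] assms(1) by auto
    next
      case False thus ?thesis using that[of x] x by auto
    qed
    have ag: "agree_excl N k a b" using d k unfolding agree_excl_def by auto
    have mp: "marg_excl N p k a = marg_excl N p k b" and mq: "marg_excl N q k a = marg_excl N q k b"
      using marg_eq[OF ag] by auto
    have mpp: "marg_excl N p k a > 0" "marg_excl N q k a > 0"
      using assms(4,5) k ab unfolding positive_conds_def by auto
    have "p a / marg_excl N p k a = q a / marg_excl N q k a"
      using assms(6) k ab unfolding cond_excl_def by auto
    moreover have "p b / marg_excl N p k b = q b / marg_excl N q k b"
      using assms(6) k ab unfolding cond_excl_def by auto
    hence "p b / marg_excl N p k a = q b / marg_excl N q k a" using mp mq by simp
    moreover have "q a > 0" "q b > 0" using pos[OF assms(1,5)] ab by auto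
    ultimately have "p a = q a * (marg_excl N p k a / marg_excl N q k a)"
      "p b = q b * (marg_excl N p k a / marg_excl N q k a)" using mpp by (simp_all add: field_simps)
    thus ?thesis using \<open>q a > 0\<close> \<open>q b > 0\<close> unfolding r_def by simp
  qed
  define z where "z = (\<lambda>i::nat. False)"
  have zb: "z \<in> bitstrings N" unfolding z_def bitstrings_def by auto
  have fin: "finite S \<Longrightarrow> S \<subseteq> {1..N} \<Longrightarrow> r (\<lambda>i. i \<in> S) = r z" for S
  proof (induction S rule: finite_induct)
    case empty thus ?case by (simp add: z_def)
  next
    case (insert x S)
    have "r (\<lambda>i. i \<in> insert x S) = r (\<lambda>i. i \<in> S)"
      by (rule step[of _ _ x]) (use insert in \<open>auto simp: bitstrings_def\<close>)
    thus ?case using insert by auto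
  qed
  have all: "r a = r z" if "a \<in> bitstrings N" for a
  proof -
    have S: "{i. a i} \<subseteq> {1..N}" using that unfolding bitstrings_def by auto
    hence "finite {i. a i}" using finite_subset by blast
    from fin[OF this S] show ?thesis by simp
  qed
  define c where "c = r z"
  have pq: "p a = c * q a" if "a \<in> bitstrings N" for a
    using all[OF that] pos[OF assms(1,5) that] unfolding c_def r_def by (simp add: field_simps)
  have "sum p (bitstrings N) = c * sum q (bitstrings N)"
    by (simp add: sum_distrib_left pq)
  hence c1: "c = 1" using assms(2,3) unfolding is_distr_def by simp
  show ?thesis
  proof
    fix a show "p a = q a"
      using pq[of a] c1 assms(2,3) unfolding is_distr_def by (cases "a \<in> bitstrings N") auto
  qed
qed

end
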